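(* Let $\mathcal{A}$ be an $l$-visibly simple $*$-algebra of operators on a tensor product of finite-dimensional Hilbert spaces indexed by the sites of a metric space. Let $O$ be any operator (not necessarily in $\mathcal{A}$). If there exists $X\in\mathcal{A}$ supported on a set $S$ such that $\mathrm{tr}(XO)\,\mathrm{tr}(I)\ne\mathrm{tr}(X)\,\mathrm{tr}(O)$, then there is an operator $P\in\mathcal{A}$ supported on the set of sites within distance $l$ of $S$ such that $[O,P]\ne0$.
   Context: An operator is supported on a set $S$ if it equals an operator on $\bigotimes_{x\in S}\mathcal{H}_x$ tensored with the identity; the support is the minimal such set (scalars have empty support). $\mathcal{A}$ is $l$-visibly simple if for every $O\in\mathcal{A}$ and every site $x$ in the support of $O$ there is $P\in\mathcal{A}$ supported within distance $l$ of $x$ with $[O,P]\ne0$. *)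

theory Defs
  imports "HOL-Analysis.Analysis"
begin

text \<open>Sites: a finite set Lam of points of a metric space of type 'a.
  The local Hilbert space at site x is C^(d x).  The tensor product has the
  orthonormal basis of configurations s (with s x < d x on sites, s x = 0 off sites).
  An operator is its matrix w.r.t. this basis; entries outside configurations are 0.\<close>

type_synonym 'a cfg = "'a \<Rightarrow> nat"
type_synonym 'a qop = "'a cfg \<Rightarrow> 'a cfg \<Rightarrow> complex"

definition confs :: "'a set \<Rightarrow> ('a \<Rightarrow> nat) \<Rightarrow> 'a cfg set" where
  "confs Lam d = {s. (\<forall>x\<in>Lam. s x < d x) \<and> (\<forall>x. x \<notin> Lam \<longrightarrow> s x = 0)}"

definition ops :: "'a set \<Rightarrow> ('a \<Rightarrow> nat) \<Rightarrow> 'a qop set" where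
  "ops Lam d = {Q. \<forall>s t. s \<notin> confs Lam d \<or> t \<notin> confs Lam d \<longrightarrow> Q s t = 0}"

definition op_mult :: "'a set \<Rightarrow> ('a \<Rightarrow> nat) \<Rightarrow> 'a qop \<Rightarrow> 'a qop \<Rightarrow> 'a qop" where
  "op_mult Lam d Q P = (\<lambda>s t. \<Sum>u\<in>confs Lam d. Q s u * P u t)"

definition op_add :: "'a qop \<Rightarrow> 'a qop \<Rightarrow> 'a qop" where
  "op_add Q P = (\<lambda>s t. Q s t + P s t)"

definition op_smult :: "complex \<Rightarrow> 'a qop \<Rightarrow> 'a qop" where
  "op_smult c Q = (\<lambda>s t. c * Q s t)"

definition op_adj :: "'a qop \<Rightarrow> 'a qop" where
  "op_adj Q = (\<lambda>s t. cnj (Q t s))"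

definition op_id :: "'a set \<Rightarrow> ('a \<Rightarrow> nat) \<Rightarrow> 'a qop" where
  "op_id Lam d = (\<lambda>s t. if s \<in> confs Lam d \<and> s = t then 1 else 0)"

definition op_trace :: "'a set \<Rightarrow> ('a \<Rightarrow> nat) \<Rightarrow> 'a qop \<Rightarrow> complex" where
  "op_trace Lam d Q = (\<Sum>s\<in>confs Lam d. Q s s)"

definition commutator :: "'a set \<Rightarrow> ('a \<Rightarrow> nat) \<Rightarrow> 'a qop \<Rightarrow> 'a qop \<Rightarrow> 'a qop" where
  "commutator Lam d Q P = (\<lambda>s t. op_mult Lam d Q P s t - op_mult Lam d P Q s t)"

definition zero_op :: "'a qop" where
  "zero_op = (\<lambda>s t. 0)"

definition restr :: "'a cfg \<Rightarrow> 'a set \<Rightarrow> 'a cfg" where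
  "restr s S = (\<lambda>x. if x \<in> S then s x else 0)"

text \<open>Q is supported on S: Q = A \<otimes> I with A acting on the factors in S.\<close>
definition supported_on :: "'a set \<Rightarrow> ('a \<Rightarrow> nat) \<Rightarrow> 'a qop \<Rightarrow> 'a set \<Rightarrow> bool" where
  "supported_on Lam d Q S \<longleftrightarrow> (\<exists>A :: 'a qop. \<forall>s\<in>confs Lam d. \<forall>t\<in>confs Lam d.
      Q s t = (if (\<forall>x\<in>Lam - S. s x = t x) then A (restr s S) (restr t S) else 0))"

definition support :: "'a set \<Rightarrow> ('a \<Rightarrow> nat) \<Rightarrow> 'a qop \<Rightarrow> 'a set" where
  "support Lam d Q = \<Inter>{S. S \<subseteq> Lam \<and> supported_on Lam d Q S}"

definition nbhd :: "'a::metric_space set \<Rightarrow> real \<Rightarrow> 'a set \<Rightarrow> 'a set" where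
  "nbhd Lam l S = {y\<in>Lam. \<exists>x\<in>S. dist x y \<le> l}"

definition star_algebra :: "'a set \<Rightarrow> ('a \<Rightarrow> nat) \<Rightarrow> 'a qop set \<Rightarrow> bool" where
  "star_algebra Lam d A \<longleftrightarrow> A \<subseteq> ops Lam d \<and> zero_op \<in> A \<and>
     (\<forall>Q\<in>A. \<forall>P\<in>A. op_add Q P \<in> A) \<and>
     (\<forall>c. \<forall>Q\<in>A. op_smult c Q \<in> A) \<and>
     (\<forall>Q\<in>A. \<forall>P\<in>A. op_mult Lam d Q P \<in> A) \<and>
     (\<forall>Q\<in>A. op_adj Q \<in> A)"

definition visibly_simple :: "'a::metric_space set \<Rightarrow> ('a \<Rightarrow> nat) \<Rightarrow> real \<Rightarrow> 'a qop set \<Rightarrow> bool" where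
  "visibly_simple Lam d l A \<longleftrightarrow> (\<forall>Q\<in>A. \<forall>x\<in>support Lam d Q. \<exists>P\<in>A.
      supported_on Lam d P (nbhd Lam l {x}) \<and> commutator Lam d Q P \<noteq> zero_op)"

end

theory Submission imports Defs "HOL-Library.Function_Algebras" begin

definition sc :: "complex \<Rightarrow> 'a qop \<Rightarrow> 'a qop" where
  "sc c Q = (\<lambda>s t. c * Q s t)"

interpretation qv: vector_space "sc :: complex \<Rightarrow> 'a qop \<Rightarrow> 'a qop"
  by unfold_locales (auto simp: sc_def fun_eq_iff algebra_simps)

lemma op_add_eq: "op_add Q P = Q + P"
  by (simp add: op_add_def fun_eq_iff)
lemma op_smult_eq: "op_smult c Q = sc c Q"
  by (simp add: op_smult_def sc_def)
lemma zero_op_eq: "zero_op = 0"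
  by (simp add: zero_op_def fun_eq_iff)

lemma finite_confs: assumes "finite Lam" shows "finite (confs Lam d)"
proof -
  have "confs Lam d \<subseteq> {f. \<forall>x. (x \<in> Lam \<longrightarrow> f x \<in> {..<Max (insert 0 (d ` Lam))}) \<and> (x \<notin> Lam \<longrightarrow> f x = 0)}"
  proof
    fix s assume "s \<in> confs Lam d"
    then show "s \<in> {f. \<forall>x. (x \<in> Lam \<longrightarrow> f x \<in> {..<Max (insert 0 (d ` Lam))}) \<and> (x \<notin> Lam \<longrightarrow> f x = 0)}"
    proof -
      have "\<And>x. x \<in> Lam \<Longrightarrow> d x \<le> Max (insert 0 (d ` Lam))" using assms by (intro Max_ge) auto
      moreover have "\<forall>x\<in>Lam. s x < d x" "\<forall>x. x \<notin> Lam \<longrightarrow> s x = 0" using \<open>s \<in> confs Lam d\<close> unfolding confs_def by auto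
      ultimately have "\<forall>x. (x \<in> Lam \<longrightarrow> s x \<in> {..<Max (insert 0 (d ` Lam))}) \<and> (x \<notin> Lam \<longrightarrow> s x = 0)"
        using less_le_trans by fastforce
      then show ?thesis by simp
    qed
  qed
  then show ?thesis
    by (rule finite_subset) (intro finite_set_of_finite_funs assms finite_lessThan)
qed

definition agree :: "'a set \<Rightarrow> 'a set \<Rightarrow> 'a cfg \<Rightarrow> 'a cfg \<Rightarrow> bool" where
  "agree Lam S s t \<longleftrightarrow> (\<forall>x\<in>Lam - S. s x = t x)"

lemma supp_char:
  "supported_on Lam d Q S \<longleftrightarrow>
    (\<forall>s\<in>confs Lam d. \<forall>t\<in>confs Lam d. \<not> agree Lam S s t \<longrightarrow> Q s t = 0) \<and>
    (\<forall>s\<in>confs Lam d. \<forall>t\<in>confs Lam d. \<forall>s'\<in>confs Lam d. \<forall>t'\<in>confs Lam d.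
       agree Lam S s t \<longrightarrow> agree Lam S s' t' \<longrightarrow> restr s S = restr s' S \<longrightarrow> restr t S = restr t' S
       \<longrightarrow> Q s t = Q s' t')"
  (is "?L \<longleftrightarrow> ?R1 \<and> ?R2")
proof
  assume ?L
  then obtain A where A: "\<forall>s\<in>confs Lam d. \<forall>t\<in>confs Lam d.
      Q s t = (if (\<forall>x\<in>Lam - S. s x = t x) then A (restr s S) (restr t S) else 0)"
    unfolding supported_on_def by blast
  show "?R1 \<and> ?R2"
  proof
    show ?R1
    proof (intro ballI impI)
      fix s t assume "s \<in> confs Lam d" "t \<in> confs Lam d" "\<not> agree Lam S s t"
      then have "Q s t = (if (\<forall>x\<in>Lam - S. s x = t x) then A (restr s S) (restr t S) else 0)" using A by simp
      moreover have "\<not> (\<forall>x\<in>Lam - S. s x = t x)" using \<open>\<not> agree Lam S s t\<close> unfolding agree_def .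
      ultimately show "Q s t = 0" by simp
    qed
    show ?R2
    proof (intro ballI impI)
      fix s t s' t' assume *: "s \<in> confs Lam d" "t \<in> confs Lam d" "s' \<in> confs Lam d" "t' \<in> confs Lam d"
        "agree Lam S s t" "agree Lam S s' t'" "restr s S = restr s' S" "restr t S = restr t' S"
      have "Q s t = A (restr s S) (restr t S)" using A *(1,2,5) unfolding agree_def by simp
      also have "\<dots> = Q s' t'" using A *(3,4,6-8) unfolding agree_def by simp
      finally show "Q s t = Q s' t'" .
    qed
  qed
next
  assume R: "?R1 \<and> ?R2"
  define P where "P = (\<lambda>u v p. fst p \<in> confs Lam d \<and> snd p \<in> confs Lam d \<and> agree Lam S (fst p) (snd p)
      \<and> restr (fst p) S = u \<and> restr (snd p) S = v)"
  define A where "A = (\<lambda>u v. Q (fst (SOME p. P u v p)) (snd (SOME p. P u v p)))"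
  have "\<forall>s\<in>confs Lam d. \<forall>t\<in>confs Lam d.
      Q s t = (if (\<forall>x\<in>Lam - S. s x = t x) then A (restr s S) (restr t S) else 0)"
  proof (intro ballI)
    fix s t assume st: "s \<in> confs Lam d" "t \<in> confs Lam d"
    show "Q s t = (if (\<forall>x\<in>Lam - S. s x = t x) then A (restr s S) (restr t S) else 0)"
    proof (cases "agree Lam S s t")
      case True
      have "P (restr s S) (restr t S) (s, t)" using st True by (simp add: P_def)
      then have "P (restr s S) (restr t S) (SOME p. P (restr s S) (restr t S) p)" by (rule someI)
      moreover obtain p where p: "p = (SOME p. P (restr s S) (restr t S) p)" by simp
      ultimately have "P (restr s S) (restr t S) p" by simp
      then have pp: "fst p \<in> confs Lam d" "snd p \<in> confs Lam d" "agree Lam S (fst p) (snd p)"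
          "restr s S = restr (fst p) S" "restr t S = restr (snd p) S" unfolding P_def by auto
      have "Q s t = Q (fst p) (snd p)"
        using conjunct2[OF R, rule_format, OF st pp(1,2) True pp(3-5)] .
      then have "Q s t = A (restr s S) (restr t S)" unfolding A_def p[symmetric] .
      then show ?thesis using True by (simp add: agree_def)
    next
      case False
      have "Q s t = 0" using conjunct1[OF R, rule_format, OF st False] .
      moreover have "\<not> (\<forall>x\<in>Lam - S. s x = t x)" using False unfolding agree_def .
      ultimately show ?thesis by auto
    qed
  qed
  then show ?L unfolding supported_on_def by blast
qed


lemma supp_zero:
  assumes "supported_on Lam d Q S" "s \<in> confs Lam d" "t \<in> confs Lam d" "\<not> agree Lam S s t"
  shows "Q s t = 0"
  using conjunct1[OF assms(1)[unfolded supp_char], rule_format, OF assms(2-4)] .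

lemma supp_inv:
  assumes "supported_on Lam d Q S" "s \<in> confs Lam d" "t \<in> confs Lam d" "s' \<in> confs Lam d" "t' \<in> confs Lam d"
    "agree Lam S s t" "agree Lam S s' t'" "restr s S = restr s' S" "restr t S = restr t' S"
  shows "Q s t = Q s' t'"
  using conjunct2[OF assms(1)[unfolded supp_char], rule_format, OF assms(2-9)] .

lemma supp_intro:
  assumes "\<And>s t. s \<in> confs Lam d \<Longrightarrow> t \<in> confs Lam d \<Longrightarrow> \<not> agree Lam S s t \<Longrightarrow> Q s t = 0"
    and "\<And>s t s' t'. s \<in> confs Lam d \<Longrightarrow> t \<in> confs Lam d \<Longrightarrow> s' \<in> confs Lam d \<Longrightarrow> t' \<in> confs Lam d \<Longrightarrow>
      agree Lam S s t \<Longrightarrow> agree Lam S s' t' \<Longrightarrow> restr s S = restr s' S \<Longrightarrow> restr t S = restr t' S \<Longrightarrow> Q s t = Q s' t'"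
  shows "supported_on Lam d Q S"
  unfolding supp_char using assms by blast

lemma restr_eqD: "restr s S = restr s' S \<Longrightarrow> x \<in> S \<Longrightarrow> s x = s' x"
  unfolding restr_def by (drule fun_cong[of _ _ x]) simp

lemma restr_eqI: "(\<And>x. x \<in> S \<Longrightarrow> s x = s' x) \<Longrightarrow> restr s S = restr s' S"
  unfolding restr_def by auto

lemma confs_out: "s \<in> confs Lam d \<Longrightarrow> x \<notin> Lam \<Longrightarrow> s x = 0"
  unfolding confs_def by auto

lemma confs_in: "s \<in> confs Lam d \<Longrightarrow> x \<in> Lam \<Longrightarrow> s x < d x"
  unfolding confs_def by auto

lemma agreeD: "agree Lam S s t \<Longrightarrow> x \<in> Lam \<Longrightarrow> x \<notin> S \<Longrightarrow> s x = t x"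
  unfolding agree_def by auto

lemma agreeI: "(\<And>x. x \<in> Lam \<Longrightarrow> x \<notin> S \<Longrightarrow> s x = t x) \<Longrightarrow> agree Lam S s t"
  unfolding agree_def by auto

lemma mono_aux:
  assumes "S \<subseteq> T" "agree Lam T s' t'" "restr s T = restr s' T" "restr t T = restr t' T" "agree Lam S s t"
  shows "agree Lam S s' t'"
proof (rule agreeI)
  fix x assume x: "x \<in> Lam" "x \<notin> S"
  show "s' x = t' x"
  proof (cases "x \<in> T")
    case True
    then have "s' x = s x" "t' x = t x" using restr_eqD[OF assms(3)] restr_eqD[OF assms(4)] by auto
    then show ?thesis using agreeD[OF assms(5) x] by simp
  next
    case False
    then show ?thesis using agreeD[OF assms(2) x(1)] by simp
  qed
qed

lemma supp_mono:
  assumes "supported_on Lam d Q S" "S \<subseteq> T"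
  shows "supported_on Lam d Q T"
proof (rule supp_intro)
  fix s t assume st: "s \<in> confs Lam d" "t \<in> confs Lam d" "\<not> agree Lam T s t"
  have "\<not> agree Lam S s t" using st(3) assms(2) unfolding agree_def by auto
  then show "Q s t = 0" using supp_zero[OF assms(1) st(1,2)] by simp
next
  fix s t s' t' assume c: "s \<in> confs Lam d" "t \<in> confs Lam d" "s' \<in> confs Lam d" "t' \<in> confs Lam d"
    and a: "agree Lam T s t" "agree Lam T s' t'" and r: "restr s T = restr s' T" "restr t T = restr t' T"
  show "Q s t = Q s' t'"
  proof (cases "agree Lam S s t")
    case True
    have a2: "agree Lam S s' t'" by (rule mono_aux[OF assms(2) a(2) r True])
    have "restr s S = restr s' S" "restr t S = restr t' S"
      using restr_eqD[OF r(1)] restr_eqD[OF r(2)] assms(2) by (auto intro!: restr_eqI)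
    then show ?thesis using supp_inv[OF assms(1) c True a2] by simp
  next
    case False
    have a2: "\<not> agree Lam S s' t'"
      using mono_aux[OF assms(2) a(1) r(1)[symmetric] r(2)[symmetric]] False by blast
    show ?thesis using supp_zero[OF assms(1) c(1,2) False] supp_zero[OF assms(1) c(3,4) a2] by simp
  qed
qed

lemma supp_inter:
  assumes "supported_on Lam d Q S" "supported_on Lam d Q T"
  shows "supported_on Lam d Q (S \<inter> T)"
proof (rule supp_intro)
  fix s t assume st: "s \<in> confs Lam d" "t \<in> confs Lam d" "\<not> agree Lam (S \<inter> T) s t"
  show "Q s t = 0"
  proof (cases "agree Lam S s t")
    case True
    then have "\<not> agree Lam T s t" using st(3) unfolding agree_def by auto
    then show ?thesis using supp_zero[OF assms(2) st(1,2)] by simp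
  next
    case False
    then show ?thesis using supp_zero[OF assms(1) st(1,2)] by simp
  qed
next
  fix s t s' t' assume c: "s \<in> confs Lam d" "t \<in> confs Lam d" "s' \<in> confs Lam d" "t' \<in> confs Lam d"
    and a: "agree Lam (S \<inter> T) s t" "agree Lam (S \<inter> T) s' t'"
    and r: "restr s (S \<inter> T) = restr s' (S \<inter> T)" "restr t (S \<inter> T) = restr t' (S \<inter> T)"
  define h1 where "h1 = (\<lambda>x. if x \<in> S then s x else s' x)"
  define h2 where "h2 = (\<lambda>x. if x \<in> S then t x else t' x)"
  have h1c: "h1 \<in> confs Lam d" using c(1,3) unfolding h1_def confs_def by auto
  have h2c: "h2 \<in> confs Lam d" using c(2,4) unfolding h2_def confs_def by auto
  have aS: "agree Lam S s t" using a(1) unfolding agree_def by auto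
  have aS2: "agree Lam S h1 h2" using a(2) unfolding agree_def h1_def h2_def by auto
  have "Q s t = Q h1 h2"
    by (rule supp_inv[OF assms(1) c(1,2) h1c h2c aS aS2]) (auto intro!: restr_eqI simp: h1_def h2_def)
  also have "\<dots> = Q s' t'"
  proof (rule supp_inv[OF assms(2) h1c h2c c(3,4)])
    show "agree Lam T h1 h2" using a unfolding agree_def h1_def h2_def by auto
    show "agree Lam T s' t'" using a(2) unfolding agree_def by auto
    show "restr h1 T = restr s' T" using restr_eqD[OF r(1)] by (auto intro!: restr_eqI simp: h1_def)
    show "restr h2 T = restr t' T" using restr_eqD[OF r(2)] by (auto intro!: restr_eqI simp: h2_def)
  qed
  finally show "Q s t = Q s' t'" .
qed

lemma restr_confs: "s \<in> confs Lam d \<Longrightarrow> restr s Lam = s"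
  unfolding restr_def confs_def by auto

lemma supp_Lam:
  assumes "Q \<in> ops Lam d" shows "supported_on Lam d Q Lam"
proof (rule supp_intro)
  fix s t assume "s \<in> confs Lam d" "t \<in> confs Lam d" "\<not> agree Lam Lam s t"
  then show "Q s t = 0" unfolding agree_def by auto
next
  fix s t s' t' assume "s \<in> confs Lam d" "t \<in> confs Lam d" "s' \<in> confs Lam d" "t' \<in> confs Lam d"
    "restr s Lam = restr s' Lam" "restr t Lam = restr t' Lam"
  then show "Q s t = Q s' t'" by (simp add: restr_confs)
qed

lemma supp_add:
  assumes "supported_on Lam d Q S" "supported_on Lam d P S"
  shows "supported_on Lam d (Q + P) S"
proof (rule supp_intro)
  fix s t assume "s \<in> confs Lam d" "t \<in> confs Lam d" "\<not> agree Lam S s t"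
  then show "(Q + P) s t = 0" using supp_zero[OF assms(1)] supp_zero[OF assms(2)] by simp
next
  fix s t s' t' assume c: "s \<in> confs Lam d" "t \<in> confs Lam d" "s' \<in> confs Lam d" "t' \<in> confs Lam d"
    and a: "agree Lam S s t" "agree Lam S s' t'" and r: "restr s S = restr s' S" "restr t S = restr t' S"
  show "(Q + P) s t = (Q + P) s' t'"
    using supp_inv[OF assms(1) c a r] supp_inv[OF assms(2) c a r] by simp
qed

lemma supp_sc:
  assumes "supported_on Lam d Q S"
  shows "supported_on Lam d (sc c Q) S"
proof (rule supp_intro)
  fix s t assume "s \<in> confs Lam d" "t \<in> confs Lam d" "\<not> agree Lam S s t"
  then show "sc c Q s t = 0" using supp_zero[OF assms(1)] by (simp add: sc_def)
next
  fix s t s' t' assume c: "s \<in> confs Lam d" "t \<in> confs Lam d" "s' \<in> confs Lam d" "t' \<in> confs Lam d"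
    and a: "agree Lam S s t" "agree Lam S s' t'" and r: "restr s S = restr s' S" "restr t S = restr t' S"
  show "sc c Q s t = sc c Q s' t'"
    using supp_inv[OF assms(1) c a r] by (simp add: sc_def)
qed

lemma agree_sym: "agree Lam S s t \<Longrightarrow> agree Lam S t s"
  unfolding agree_def by auto

lemma supp_adj:
  assumes "supported_on Lam d Q S"
  shows "supported_on Lam d (op_adj Q) S"
proof (rule supp_intro)
  fix s t assume "s \<in> confs Lam d" "t \<in> confs Lam d" "\<not> agree Lam S s t"
  then show "op_adj Q s t = 0" using supp_zero[OF assms(1), of t s] agree_sym by (auto simp: op_adj_def)
next
  fix s t s' t' assume c: "s \<in> confs Lam d" "t \<in> confs Lam d" "s' \<in> confs Lam d" "t' \<in> confs Lam d"
    and a: "agree Lam S s t" "agree Lam S s' t'" and r: "restr s S = restr s' S" "restr t S = restr t' S"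
  show "op_adj Q s t = op_adj Q s' t'"
    using supp_inv[OF assms(1) c(2,1,4,3) agree_sym[OF a(1)] agree_sym[OF a(2)] r(2,1)] by (simp add: op_adj_def)
qed

lemma supp_id: "supported_on Lam d (op_id Lam d) S"
proof (rule supp_intro)
  fix s t assume "s \<in> confs Lam d" "t \<in> confs Lam d" "\<not> agree Lam S s t"
  then show "op_id Lam d s t = 0" unfolding op_id_def agree_def by auto
next
  fix s t s' t' assume c: "s \<in> confs Lam d" "t \<in> confs Lam d" "s' \<in> confs Lam d" "t' \<in> confs Lam d"
    and a: "agree Lam S s t" "agree Lam S s' t'" and r: "restr s S = restr s' S" "restr t S = restr t' S"
  have e1: "s = t \<longleftrightarrow> restr s S = restr t S"
  proof
    assume "restr s S = restr t S"
    then show "s = t"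
      using restr_eqD[of s S t] agreeD[OF a(1)] confs_out[OF c(1)] confs_out[OF c(2)] by (metis ext)
  qed simp
  have e2: "s' = t' \<longleftrightarrow> restr s' S = restr t' S"
  proof
    assume "restr s' S = restr t' S"
    then show "s' = t'"
      using restr_eqD[of s' S t'] agreeD[OF a(2)] confs_out[OF c(3)] confs_out[OF c(4)] by (metis ext)
  qed simp
  show "op_id Lam d s t = op_id Lam d s' t'"
    unfolding op_id_def using e1 e2 r c by auto
qed


lemma agree_trans: "agree Lam S s u \<Longrightarrow> agree Lam S u t \<Longrightarrow> agree Lam S s t"
  unfolding agree_def by auto

lemma sum_filter_conf:
  assumes "finite C" "\<And>u. u \<in> C \<Longrightarrow> \<not> p u \<Longrightarrow> f u = 0"
  shows "sum f C = sum f {u\<in>C. p u}"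
proof -
  have "sum f C = (\<Sum>u\<in>C. if p u then f u else 0)"
    by (rule sum.cong) (use assms(2) in auto)
  also have "\<dots> = sum f {u\<in>C. p u}" by (rule sum.inter_filter[symmetric]) (rule assms(1))
  finally show ?thesis .
qed

lemma supp_mult:
  assumes fin: "finite Lam" and P: "supported_on Lam d P N" and Q: "supported_on Lam d Q N"
  shows "supported_on Lam d (op_mult Lam d P Q) N"
proof (rule supp_intro)
  fix s t assume st: "s \<in> confs Lam d" "t \<in> confs Lam d" "\<not> agree Lam N s t"
  have "\<And>u. u \<in> confs Lam d \<Longrightarrow> P s u * Q u t = 0"
  proof -
    fix u assume u: "u \<in> confs Lam d"
    show "P s u * Q u t = 0"
    proof (cases "agree Lam N s u")
      case True
      then have "\<not> agree Lam N u t" using st(3) agree_trans by blast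
      then show ?thesis using supp_zero[OF Q u st(2)] by simp
    next
      case False
      then show ?thesis using supp_zero[OF P st(1) u] by simp
    qed
  qed
  then show "op_mult Lam d P Q s t = 0" unfolding op_mult_def by (simp add: sum.neutral)
next
  fix s t s' t' assume c: "s \<in> confs Lam d" "t \<in> confs Lam d" "s' \<in> confs Lam d" "t' \<in> confs Lam d"
    and a: "agree Lam N s t" "agree Lam N s' t'" and r: "restr s N = restr s' N" "restr t N = restr t' N"
  have finC: "finite (confs Lam d)" using finite_confs[OF fin] .
  define U where "U = {u\<in>confs Lam d. agree Lam N s u}"
  define U' where "U' = {u\<in>confs Lam d. agree Lam N s' u}"
  have e1: "op_mult Lam d P Q s t = (\<Sum>u\<in>U. P s u * Q u t)"
    unfolding op_mult_def U_def
    by (rule sum_filter_conf[OF finC]) (use supp_zero[OF P c(1)] in simp)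
  have e2: "op_mult Lam d P Q s' t' = (\<Sum>u\<in>U'. P s' u * Q u t')"
    unfolding op_mult_def U'_def
    by (rule sum_filter_conf[OF finC]) (use supp_zero[OF P c(3)] in simp)
  define j where "j = (\<lambda>u x. if x \<in> N then u x else s' x)"
  define i where "i = (\<lambda>u x. if x \<in> N then u x else s x)"
  have "(\<Sum>u\<in>U. P s u * Q u t) = (\<Sum>u\<in>U'. P s' u * Q u t')"
  proof (rule sum.reindex_bij_witness[of U i j])
    fix u assume u: "u \<in> U"
    then have uc: "u \<in> confs Lam d" and au: "agree Lam N s u" unfolding U_def by auto
    show "i (j u) = u"
    proof
      fix x show "i (j u) x = u x"
      proof (cases "x \<in> N")
        case False
        then show ?thesis
          using agreeD[OF au, of x] confs_out[OF uc, of x] confs_out[OF c(1), of x] unfolding i_def j_def by (cases "x \<in> Lam") auto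
      qed (simp add: i_def j_def)
    qed
    have jc: "j u \<in> confs Lam d" using uc c(3) unfolding j_def confs_def by auto
    have aj: "agree Lam N s' (j u)" unfolding j_def agree_def by auto
    show "j u \<in> U'" using jc aj unfolding U'_def by simp
    have rj: "restr u N = restr (j u) N" by (rule restr_eqI) (simp add: j_def)
    have "P s' (j u) = P s u"
      by (rule supp_inv[OF P c(3) jc c(1) uc aj au r(1)[symmetric] rj[symmetric]])
    moreover have "Q (j u) t' = Q u t"
    proof (rule supp_inv[OF Q jc c(4) uc c(2)])
      show "agree Lam N (j u) t'" using a(2) unfolding j_def agree_def by auto
      show "agree Lam N u t" using agree_trans[OF agree_sym[OF au] a(1)] .
    qed (use rj r(2) in auto)
    ultimately show "P s' (j u) * Q (j u) t' = P s u * Q u t" by simp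
  next
    fix u assume u: "u \<in> U'"
    then have uc: "u \<in> confs Lam d" and au: "agree Lam N s' u" unfolding U'_def by auto
    show "j (i u) = u"
    proof
      fix x show "j (i u) x = u x"
      proof (cases "x \<in> N")
        case False
        then show ?thesis
          using agreeD[OF au, of x] confs_out[OF uc, of x] confs_out[OF c(3), of x] unfolding i_def j_def by (cases "x \<in> Lam") auto
      qed (simp add: i_def j_def)
    qed
    have ic: "i u \<in> confs Lam d" using uc c(1) unfolding i_def confs_def by auto
    have ai: "agree Lam N s (i u)" unfolding i_def agree_def by auto
    show "i u \<in> U" using ic ai unfolding U_def by simp
  qed
  then show "op_mult Lam d P Q s t = op_mult Lam d P Q s' t'" using e1 e2 by simp
qed


abbreviation mm where "mm Lam d \<equiv> op_mult Lam d"

lemma mult_assoc: "op_mult Lam d (op_mult Lam d P Q) R = op_mult Lam d P (op_mult Lam d Q R)"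
proof (intro ext)
  fix s t
  have "op_mult Lam d (op_mult Lam d P Q) R s t = (\<Sum>v\<in>confs Lam d. \<Sum>u\<in>confs Lam d. P s u * Q u v * R v t)"
    unfolding op_mult_def by (simp add: sum_distrib_right)
  also have "\<dots> = (\<Sum>u\<in>confs Lam d. \<Sum>v\<in>confs Lam d. P s u * Q u v * R v t)" by (rule sum.swap)
  also have "\<dots> = op_mult Lam d P (op_mult Lam d Q R) s t"
    unfolding op_mult_def by (simp add: sum_distrib_left mult.assoc)
  finally show "op_mult Lam d (op_mult Lam d P Q) R s t = op_mult Lam d P (op_mult Lam d Q R) s t" .
qed

lemma trace_comm: "op_trace Lam d (op_mult Lam d P Q) = op_trace Lam d (op_mult Lam d Q P)"
  unfolding op_trace_def op_mult_def by (subst sum.swap) (simp add: mult.commute)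

lemma adj_mult: "op_adj (op_mult Lam d P Q) = op_mult Lam d (op_adj Q) (op_adj P)"
  unfolding op_adj_def op_mult_def by (simp add: fun_eq_iff mult.commute)

lemma adj_adj[simp]: "op_adj (op_adj P) = P"
  unfolding op_adj_def by simp

lemma adj_id[simp]: "op_adj (op_id Lam d) = op_id Lam d"
  unfolding op_adj_def op_id_def by (intro ext) auto

lemma adj_add[simp]: "op_adj (P + Q) = op_adj P + op_adj Q"
  unfolding op_adj_def by (simp add: fun_eq_iff)

lemma adj_sc[simp]: "op_adj (sc c P) = sc (cnj c) (op_adj P)"
  unfolding op_adj_def sc_def by (simp add: fun_eq_iff)

lemma adj_zero[simp]: "op_adj 0 = 0"
  unfolding op_adj_def by (simp add: fun_eq_iff)

lemma mult_add_left: "op_mult Lam d (P + Q) R = op_mult Lam d P R + op_mult Lam d Q R"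
  unfolding op_mult_def by (simp add: fun_eq_iff distrib_right sum.distrib)

lemma mult_add_right: "op_mult Lam d R (P + Q) = op_mult Lam d R P + op_mult Lam d R Q"
  unfolding op_mult_def by (simp add: fun_eq_iff distrib_left sum.distrib)

lemma mult_diff_left: "op_mult Lam d (P - Q) R = op_mult Lam d P R - op_mult Lam d Q R"
  unfolding op_mult_def by (simp add: fun_eq_iff left_diff_distrib sum_subtractf)

lemma mult_diff_right: "op_mult Lam d R (P - Q) = op_mult Lam d R P - op_mult Lam d R Q"
  unfolding op_mult_def by (simp add: fun_eq_iff right_diff_distrib sum_subtractf)

lemma mult_sc_left: "op_mult Lam d (sc c P) R = sc c (op_mult Lam d P R)"
  unfolding op_mult_def sc_def by (simp add: fun_eq_iff sum_distrib_left mult.assoc)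

lemma mult_sc_right: "op_mult Lam d R (sc c P) = sc c (op_mult Lam d R P)"
  unfolding op_mult_def sc_def by (simp add: fun_eq_iff sum_distrib_left mult.assoc mult.left_commute)

lemma mult_zero_left[simp]: "op_mult Lam d 0 R = 0"
  unfolding op_mult_def by (simp add: fun_eq_iff)

lemma mult_zero_right[simp]: "op_mult Lam d R 0 = 0"
  unfolding op_mult_def by (simp add: fun_eq_iff)

lemma trace_add: "op_trace Lam d (P + Q) = op_trace Lam d P + op_trace Lam d Q"
  unfolding op_trace_def by (simp add: sum.distrib)

lemma trace_diff: "op_trace Lam d (P - Q) = op_trace Lam d P - op_trace Lam d Q"
  unfolding op_trace_def by (simp add: sum_subtractf)

lemma trace_sc: "op_trace Lam d (sc c P) = c * op_trace Lam d P"
  unfolding op_trace_def sc_def by (simp add: sum_distrib_left)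

lemma opsD: "Q \<in> ops Lam d \<Longrightarrow> s \<notin> confs Lam d \<or> t \<notin> confs Lam d \<Longrightarrow> Q s t = 0"
  unfolding ops_def by auto

lemma mult_id_right: assumes "P \<in> ops Lam d" "finite Lam" shows "op_mult Lam d P (op_id Lam d) = P"
proof (intro ext)
  fix s t
  have "op_mult Lam d P (op_id Lam d) s t = (\<Sum>u\<in>confs Lam d. if u = t then (if t \<in> confs Lam d then P s t else 0) else 0)"
    unfolding op_mult_def op_id_def by (rule sum.cong) auto
  also have "\<dots> = P s t" using opsD[OF assms(1), of s t] by (simp add: sum.delta finite_confs[OF assms(2)])
  finally show "op_mult Lam d P (op_id Lam d) s t = P s t" .
qed

lemma mult_id_left: assumes "P \<in> ops Lam d" "finite Lam" shows "op_mult Lam d (op_id Lam d) P = P"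
proof (intro ext)
  fix s t
  have "op_mult Lam d (op_id Lam d) P s t = (\<Sum>u\<in>confs Lam d. if s = u then (if s \<in> confs Lam d then P s t else 0) else 0)"
    unfolding op_mult_def op_id_def by (rule sum.cong) auto
  also have "\<dots> = P s t" using opsD[OF assms(1), of s t] by (simp add: sum.delta finite_confs[OF assms(2)])
  finally show "op_mult Lam d (op_id Lam d) P s t = P s t" .
qed

lemma ops_mult: "P \<in> ops Lam d \<Longrightarrow> Q \<in> ops Lam d \<Longrightarrow> op_mult Lam d P Q \<in> ops Lam d"
  unfolding ops_def op_mult_def by auto

lemma ops_adj: "P \<in> ops Lam d \<Longrightarrow> op_adj P \<in> ops Lam d"
  unfolding ops_def op_adj_def by auto

lemma ops_id: "op_id Lam d \<in> ops Lam d"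
  unfolding ops_def op_id_def by auto

lemma ops_subspace: "qv.subspace (ops Lam d)"
  unfolding qv.subspace_def ops_def sc_def by auto

definition ip :: "'a set \<Rightarrow> ('a \<Rightarrow> nat) \<Rightarrow> 'a qop \<Rightarrow> 'a qop \<Rightarrow> complex" where
  "ip Lam d F G = op_trace Lam d (op_mult Lam d (op_adj F) G)"

lemma ip_add_left: "ip Lam d (F + G) H = ip Lam d F H + ip Lam d G H"
  unfolding ip_def by (simp add: mult_add_left trace_add)
lemma ip_add_right: "ip Lam d H (F + G) = ip Lam d H F + ip Lam d H G"
  unfolding ip_def by (simp add: mult_add_right trace_add)
lemma ip_diff_right: "ip Lam d H (F - G) = ip Lam d H F - ip Lam d H G"
  unfolding ip_def by (simp add: mult_diff_right trace_diff)
lemma ip_sc_left: "ip Lam d (sc c F) H = cnj c * ip Lam d F H"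
  unfolding ip_def by (simp add: mult_sc_left trace_sc)
lemma ip_sc_right: "ip Lam d H (sc c F) = c * ip Lam d H F"
  unfolding ip_def by (simp add: mult_sc_right trace_sc)
lemma ip_zero_left: "ip Lam d 0 H = 0"
  unfolding ip_def op_trace_def op_mult_def op_adj_def by simp
lemma ip_zero_left': "ip Lam d (\<lambda>a b. 0) H = 0"
  unfolding ip_def op_trace_def op_mult_def op_adj_def by simp

lemma ip_self_zero:
  assumes fin: "finite Lam" and F: "F \<in> ops Lam d" and z: "ip Lam d F F = 0"
  shows "F = 0"
proof -
  have finC: "finite (confs Lam d)" using finite_confs[OF fin] .
  have "ip Lam d F F = (\<Sum>s\<in>confs Lam d. \<Sum>u\<in>confs Lam d. complex_of_real ((cmod (F u s))\<^sup>2))"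
    unfolding ip_def op_trace_def op_mult_def op_adj_def
    by (intro sum.cong refl) (metis complex_norm_square mult.commute)
  also have "\<dots> = complex_of_real (\<Sum>s\<in>confs Lam d. \<Sum>u\<in>confs Lam d. (cmod (F u s))\<^sup>2)" by simp
  finally have e: "ip Lam d F F = complex_of_real (\<Sum>s\<in>confs Lam d. \<Sum>u\<in>confs Lam d. (cmod (F u s))\<^sup>2)" .
  have "(\<Sum>s\<in>confs Lam d. \<Sum>u\<in>confs Lam d. (cmod (F u s))\<^sup>2) = 0" using e z of_real_eq_0_iff by metis
  then have h1: "\<forall>s\<in>confs Lam d. (\<Sum>u\<in>confs Lam d. (cmod (F u s))\<^sup>2) = 0"
    using sum_nonneg_eq_0_iff[OF finC, of "\<lambda>s. \<Sum>u\<in>confs Lam d. (cmod (F u s))\<^sup>2"]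
    by (simp add: sum_nonneg)
  have "\<forall>s\<in>confs Lam d. \<forall>u\<in>confs Lam d. (cmod (F u s))\<^sup>2 = 0"
  proof (intro ballI)
    fix s u assume su: "s \<in> confs Lam d" "u \<in> confs Lam d"
    have "(\<Sum>u\<in>confs Lam d. (cmod (F u s))\<^sup>2) = 0" using h1 su(1) by blast
    then show "(cmod (F u s))\<^sup>2 = 0"
      using sum_nonneg_eq_0_iff[OF finC, of "\<lambda>u. (cmod (F u s))\<^sup>2"] su(2) by simp
  qed
  then have "\<forall>s\<in>confs Lam d. \<forall>u\<in>confs Lam d. F u s = 0" by simp
  then show "F = 0" using opsD[OF F] by (auto simp: fun_eq_iff)
qed


lemma ip_span_zero:
  assumes "\<forall>v\<in>F. ip Lam d v R = 0" "u \<in> qv.span F"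
  shows "ip Lam d u R = 0"
  using assms(2)
proof (induct rule: qv.span_induct_alt)
  case base
  then show ?case by (simp add: ip_zero_left ip_zero_left')
next
  case (step c x y)
  have "ip Lam d (sc c x + y) R = cnj c * ip Lam d x R + ip Lam d y R" by (simp only: ip_add_left ip_sc_left)
  then have "ip Lam d (sc c x + y) R = 0" using assms(1) step by simp
  then show ?case by (simp add: plus_fun_def)
qed

lemma span_ops: "F \<subseteq> ops Lam d \<Longrightarrow> qv.span F \<subseteq> ops Lam d"
  by (rule qv.span_minimal[OF _ ops_subspace])

lemma proj_exists:
  assumes fin: "finite Lam" and "finite F" and "F \<subseteq> ops Lam d"
  shows "\<forall>R0. \<exists>Y\<in>qv.span F. \<forall>v\<in>F. ip Lam d v (R0 - Y) = 0"
  using assms(2,3)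
proof (induct F rule: finite_induct)
  case empty
  then show ?case using qv.span_zero by blast
next
  case (insert v F)
  have vops: "v \<in> ops Lam d" and Fops: "F \<subseteq> ops Lam d" using insert(4) by auto
  have IH: "\<forall>R0. \<exists>Y\<in>qv.span F. \<forall>u\<in>F. ip Lam d u (R0 - Y) = 0" using insert(3)[OF Fops] .
  show ?case
  proof
    fix R0
    obtain Y1 where Y1: "Y1 \<in> qv.span F" "\<forall>u\<in>F. ip Lam d u (R0 - Y1) = 0" using IH by blast
    obtain W where W: "W \<in> qv.span F" "\<forall>u\<in>F. ip Lam d u (v - W) = 0" using IH by blast
    define w where "w = v - W"
    have Wops: "W \<in> ops Lam d" using span_ops[OF Fops] W(1) by blast
    have wops: "w \<in> ops Lam d" unfolding w_def using qv.subspace_diff[OF ops_subspace vops Wops] .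
    have Y1s: "Y1 \<in> qv.span (insert v F)" using Y1(1) qv.span_mono[of F "insert v F"] by blast
    have ws: "w \<in> qv.span (insert v F)" unfolding w_def
      using qv.span_diff[OF qv.span_base[of v "insert v F"]] W(1) qv.span_mono[of F "insert v F"] by blast
    show "\<exists>Y\<in>qv.span (insert v F). \<forall>u\<in>insert v F. ip Lam d u (R0 - Y) = 0"
    proof (cases "w = 0")
      case True
      then have "v = W" unfolding w_def by simp
      then have "ip Lam d v (R0 - Y1) = 0" using ip_span_zero[OF Y1(2)] W(1) by simp
      then show ?thesis using Y1s Y1(2) by blast
    next
      case False
      have nz: "ip Lam d w w \<noteq> 0" using ip_self_zero[OF fin wops] False by blast
      define c where "c = ip Lam d w (R0 - Y1) / ip Lam d w w"
      define Y where "Y = Y1 + sc c w"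
      have Ys: "Y \<in> qv.span (insert v F)" unfolding Y_def by (intro qv.span_add Y1s qv.span_scale ws)
      have OY: "R0 - Y = (R0 - Y1) - sc c w" unfolding Y_def by simp
      have onF: "\<forall>u\<in>F. ip Lam d u (R0 - Y) = 0"
        using Y1(2) W(2) unfolding OY w_def by (simp add: ip_diff_right ip_sc_right)
      have "ip Lam d w (R0 - Y) = 0"
        unfolding OY using nz by (simp add: ip_diff_right ip_sc_right c_def)
      moreover have "ip Lam d W (R0 - Y) = 0" using ip_span_zero[OF onF W(1)] .
      moreover have "v = w + W" unfolding w_def by simp
      ultimately have "ip Lam d v (R0 - Y) = 0" by (simp add: ip_add_left)
      then show ?thesis using Ys onF by blast
    qed
  qed
qed


lemma sum_fun_apply: "(sum f A) x = (\<Sum>i\<in>A. f i x)"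
proof (cases "finite A")
  case True
  then show ?thesis by (induct A rule: finite_induct) simp_all
qed simp

definition elem :: "'a cfg \<Rightarrow> 'a cfg \<Rightarrow> 'a qop" where
  "elem s t = (\<lambda>a b. if a = s \<and> b = t then 1 else 0)"

lemma ops_span_elem:
  assumes fin: "finite Lam"
  shows "ops Lam d \<subseteq> qv.span ((\<lambda>(s, t). elem s t) ` (confs Lam d \<times> confs Lam d))"
proof
  fix F assume F: "F \<in> ops Lam d"
  let ?E = "(\<lambda>(s, t). elem s t) ` (confs Lam d \<times> confs Lam d)"
  have finC: "finite (confs Lam d)" using finite_confs[OF fin] .
  have eq: "F = (\<Sum>p\<in>confs Lam d \<times> confs Lam d. sc (F (fst p) (snd p)) (elem (fst p) (snd p)))"
  proof (intro ext)
    fix a b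
    have "(\<Sum>p\<in>confs Lam d \<times> confs Lam d. sc (F (fst p) (snd p)) (elem (fst p) (snd p))) a b
        = (\<Sum>p\<in>confs Lam d \<times> confs Lam d. if p = (a, b) then F a b else 0)"
      unfolding sum_fun_apply by (rule sum.cong) (auto simp: sc_def elem_def)
    also have "\<dots> = F a b"
      using opsD[OF F, of a b] finC by (simp add: sum.delta)
    finally show "F a b = (\<Sum>p\<in>confs Lam d \<times> confs Lam d. sc (F (fst p) (snd p)) (elem (fst p) (snd p))) a b" by simp
  qed
  have "(\<Sum>p\<in>confs Lam d \<times> confs Lam d. sc (F (fst p) (snd p)) (elem (fst p) (snd p))) \<in> qv.span ?E"
    by (intro qv.span_sum qv.span_scale qv.span_base) force
  then show "F \<in> qv.span ?E" using eq by simp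
qed

lemma supp_empty:
  assumes "supported_on Lam d P {}" "P \<in> ops Lam d"
  shows "\<exists>k. P = sc k (op_id Lam d)"
proof -
  obtain A where A: "\<forall>s\<in>confs Lam d. \<forall>t\<in>confs Lam d.
      P s t = (if (\<forall>x\<in>Lam - {}. s x = t x) then A (restr s {}) (restr t {}) else 0)"
    using assms(1) unfolding supported_on_def by blast
  have r: "\<And>s. restr s {} = (\<lambda>x. 0)" unfolding restr_def by simp
  have "P = sc (A (\<lambda>x. 0) (\<lambda>x. 0)) (op_id Lam d)"
  proof (intro ext)
    fix s t
    show "P s t = sc (A (\<lambda>x. 0) (\<lambda>x. 0)) (op_id Lam d) s t"
    proof (cases "s \<in> confs Lam d \<and> t \<in> confs Lam d")
      case True
      have "(\<forall>x\<in>Lam. s x = t x) \<longleftrightarrow> s = t"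
      proof
        assume "\<forall>x\<in>Lam. s x = t x"
        then show "s = t" using True confs_out[of s Lam d] confs_out[of t Lam d] by (metis ext)
      qed simp
      then show ?thesis using A True by (auto simp: sc_def op_id_def r)
    next
      case False
      then show ?thesis using opsD[OF assms(2), of s t] by (auto simp: sc_def op_id_def)
    qed
  qed
  then show ?thesis by blast
qed

lemma supp_support:
  assumes fin: "finite Lam" and Q: "Q \<in> ops Lam d"
  shows "supported_on Lam d Q (support Lam d Q)"
proof -
  define Fam where "Fam = {S. S \<subseteq> Lam \<and> supported_on Lam d Q S}"
  have finF: "finite Fam" unfolding Fam_def using fin by (simp add: finite_subset[of _ "Pow Lam"])
  have key: "G \<subseteq> Fam \<Longrightarrow> G \<noteq> {} \<Longrightarrow> \<Inter>G \<in> Fam" for G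
  proof -
    assume G: "G \<subseteq> Fam" "G \<noteq> {}"
    have "finite G" using finite_subset[OF G(1) finF] .
    then show "\<Inter>G \<in> Fam" using G(2) G(1)
    proof (induct G rule: finite_ne_induct)
      case (singleton x)
      then show ?case by simp
    next
      case (insert x G)
      then have "x \<in> Fam" "\<Inter>G \<in> Fam" by auto
      then show ?case unfolding Fam_def using supp_inter[of Lam d Q x "\<Inter>G"] by auto
    qed
  qed
  have "Lam \<in> Fam" unfolding Fam_def using supp_Lam[OF Q] by simp
  then have "\<Inter>Fam \<in> Fam" using key[of Fam] by blast
  then show ?thesis unfolding Fam_def support_def by simp
qed

lemma support_sub: "S \<subseteq> Lam \<Longrightarrow> supported_on Lam d Q S \<Longrightarrow> support Lam d Q \<subseteq> S"
  unfolding support_def by blast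

lemma split_sum:
  fixes f g :: "'a cfg \<Rightarrow> complex"
  assumes fin: "finite Lam" and S: "S \<subseteq> Lam"
  shows "(\<Sum>s\<in>confs Lam d. f (restr s S) * g (restr s (Lam - S)))
       = (\<Sum>\<sigma>\<in>confs S d. f \<sigma>) * (\<Sum>\<tau>\<in>confs (Lam - S) d. g \<tau>)"
proof -
  let ?T = "Lam - S"
  define h where "h = (\<lambda>s. (restr s S, restr s ?T))"
  have bij: "bij_betw h (confs Lam d) (confs S d \<times> confs ?T d)"
    unfolding bij_betw_def
  proof
    show "inj_on h (confs Lam d)"
    proof (rule inj_onI)
      fix s s' assume c: "s \<in> confs Lam d" "s' \<in> confs Lam d" and e: "h s = h s'"
      then have e1: "restr s S = restr s' S" and e2: "restr s ?T = restr s' ?T" unfolding h_def by auto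
      show "s = s'"
      proof
        fix x show "s x = s' x"
        proof (cases "x \<in> Lam")
          case True
          then show ?thesis using restr_eqD[OF e1, of x] restr_eqD[OF e2, of x] by (cases "x \<in> S") auto
        next
          case False
          then show ?thesis using confs_out[OF c(1)] confs_out[OF c(2)] by simp
        qed
      qed
    qed
    show "h ` confs Lam d = confs S d \<times> confs ?T d"
    proof
      show "h ` confs Lam d \<subseteq> confs S d \<times> confs ?T d"
        using S unfolding h_def confs_def restr_def by auto
      show "confs S d \<times> confs ?T d \<subseteq> h ` confs Lam d"
      proof
        fix p assume p: "p \<in> confs S d \<times> confs ?T d"
        obtain \<sigma> \<tau> where pp: "p = (\<sigma>, \<tau>)" by (cases p)
        define m where "m = (\<lambda>x. if x \<in> S then \<sigma> x else \<tau> x)"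
        have mc: "m \<in> confs Lam d" using p S unfolding pp m_def confs_def by auto
        have "restr m S = \<sigma>" using p unfolding pp m_def restr_def confs_def by auto
        moreover have "restr m ?T = \<tau>" using p unfolding pp m_def restr_def confs_def by auto
        ultimately have "h m = p" unfolding h_def pp by simp
        then show "p \<in> h ` confs Lam d" using mc by force
      qed
    qed
  qed
  have "(\<Sum>s\<in>confs Lam d. f (restr s S) * g (restr s ?T)) = (\<Sum>s\<in>confs Lam d. (\<lambda>(a, b). f a * g b) (h s))"
    unfolding h_def by simp
  also have "\<dots> = (\<Sum>p\<in>confs S d \<times> confs ?T d. (\<lambda>(a, b). f a * g b) p)"
    by (rule sum.reindex_bij_betw[OF bij])
  also have "\<dots> = (\<Sum>a\<in>confs S d. \<Sum>b\<in>confs ?T d. f a * g b)"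
    by (rule sum.cartesian_product[symmetric])
  also have "\<dots> = (\<Sum>\<sigma>\<in>confs S d. f \<sigma>) * (\<Sum>\<tau>\<in>confs ?T d. g \<tau>)"
    by (rule sum_product[symmetric])
  finally show ?thesis .
qed

lemma trace_factor:
  assumes fin: "finite Lam" and S: "S \<subseteq> Lam"
    and X: "supported_on Lam d X S" and P: "supported_on Lam d P (Lam - S)"
  shows "op_trace Lam d (op_mult Lam d X P) * op_trace Lam d (op_id Lam d)
       = op_trace Lam d X * op_trace Lam d P"
proof -
  let ?T = "Lam - S"
  let ?C = "confs Lam d"
  obtain a where a: "\<forall>s\<in>?C. \<forall>t\<in>?C. X s t = (if (\<forall>x\<in>Lam - S. s x = t x) then a (restr s S) (restr t S) else 0)"
    using X unfolding supported_on_def by blast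
  obtain b where b: "\<forall>s\<in>?C. \<forall>t\<in>?C. P s t = (if (\<forall>x\<in>Lam - ?T. s x = t x) then b (restr s ?T) (restr t ?T) else 0)"
    using P unfolding supported_on_def by blast
  have Xd: "X s s = a (restr s S) (restr s S)" if "s \<in> ?C" for s using a that by simp
  have Pd: "P s s = b (restr s ?T) (restr s ?T)" if "s \<in> ?C" for s using b that by simp
  have finC: "finite ?C" using finite_confs[OF fin] .
  have diag: "(\<Sum>u\<in>?C. X s u * P u s) = X s s * P s s" if s: "s \<in> ?C" for s
  proof -
    have "(\<Sum>u\<in>?C. X s u * P u s) = (\<Sum>u\<in>?C. if u = s then X s s * P s s else 0)"
    proof (rule sum.cong[OF refl])
      fix u assume u: "u \<in> ?C"
      show "X s u * P u s = (if u = s then X s s * P s s else 0)"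
      proof (cases "u = s")
        case False
        show ?thesis
        proof (cases "agree Lam S s u")
          case True
          have "\<not> agree Lam ?T u s"
          proof
            assume "agree Lam ?T u s"
            then have "u = s"
              using True confs_out[OF u] confs_out[OF s] unfolding agree_def
              by (metis Diff_iff ext)
            then show False using False by simp
          qed
          then show ?thesis using supp_zero[OF P u s] False by simp
        next
          case False
          then show ?thesis using supp_zero[OF X s u] \<open>u \<noteq> s\<close> by simp
        qed
      qed simp
    qed
    also have "\<dots> = X s s * P s s" using s finC by (simp add: sum.delta')
    finally show ?thesis .
  qed
  define al where "al = (\<lambda>\<sigma>. a \<sigma> \<sigma>)"
  define be where "be = (\<lambda>\<tau>. b \<tau> \<tau>)"
  define o1 where "o1 = (\<lambda>_::'a cfg. 1::complex)"
  have t1: "op_trace Lam d (op_mult Lam d X P) = (\<Sum>s\<in>?C. al (restr s S) * be (restr s ?T))"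
    unfolding op_trace_def op_mult_def al_def be_def by (rule sum.cong) (simp_all add: diag Xd Pd)
  have t2: "op_trace Lam d X = (\<Sum>s\<in>?C. al (restr s S) * o1 (restr s ?T))"
    unfolding op_trace_def al_def o1_def by (rule sum.cong) (simp_all add: Xd)
  have t3: "op_trace Lam d P = (\<Sum>s\<in>?C. o1 (restr s S) * be (restr s ?T))"
    unfolding op_trace_def be_def o1_def by (rule sum.cong) (simp_all add: Pd)
  have t4: "op_trace Lam d (op_id Lam d) = (\<Sum>s\<in>?C. o1 (restr s S) * o1 (restr s ?T))"
    unfolding op_trace_def op_id_def o1_def by (rule sum.cong) simp_all
  have e1: "op_trace Lam d (op_mult Lam d X P) = sum al (confs S d) * sum be (confs ?T d)"
    unfolding t1 by (rule split_sum[OF fin S])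
  have e2: "op_trace Lam d X = sum al (confs S d) * sum o1 (confs ?T d)"
    unfolding t2 by (rule split_sum[OF fin S])
  have e3: "op_trace Lam d P = sum o1 (confs S d) * sum be (confs ?T d)"
    unfolding t3 by (rule split_sum[OF fin S])
  have e4: "op_trace Lam d (op_id Lam d) = sum o1 (confs S d) * sum o1 (confs ?T d)"
    unfolding t4 by (rule split_sum[OF fin S])
  show ?thesis unfolding e1 e2 e3 e4 by (simp only: mult_ac)
qed


lemma comm_zero_iff: "commutator Lam d Q P = zero_op \<longleftrightarrow> op_mult Lam d Q P = op_mult Lam d P Q"
  unfolding commutator_def zero_op_def by (auto simp: fun_eq_iff)

lemma ip_mult1: "ip Lam d Z (op_mult Lam d Y b) = ip Lam d (op_mult Lam d Z (op_adj b)) Y"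
proof -
  have "ip Lam d Z (op_mult Lam d Y b) = op_trace Lam d (op_mult Lam d (op_mult Lam d (op_adj Z) Y) b)"
    unfolding ip_def by (simp add: mult_assoc)
  also have "\<dots> = op_trace Lam d (op_mult Lam d b (op_mult Lam d (op_adj Z) Y))" by (rule trace_comm)
  also have "\<dots> = ip Lam d (op_mult Lam d Z (op_adj b)) Y"
    unfolding ip_def by (simp add: mult_assoc adj_mult)
  finally show ?thesis .
qed

lemma ip_mult2: "ip Lam d Z (op_mult Lam d b Y) = ip Lam d (op_mult Lam d (op_adj b) Z) Y"
  unfolding ip_def by (simp add: mult_assoc adj_mult)

lemma ip_adj_left: "ip Lam d (op_adj X) F = op_trace Lam d (op_mult Lam d X F)"
  unfolding ip_def by simp

lemma ip_id_left: "F \<in> ops Lam d \<Longrightarrow> finite Lam \<Longrightarrow> ip Lam d (op_id Lam d) F = op_trace Lam d F"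
  unfolding ip_def by (simp add: mult_id_left)

theorem mainTheorem20:
  fixes Lam :: "'a::metric_space set" and d :: "'a \<Rightarrow> nat" and l :: real
    and A :: "'a qop set" and Q X :: "'a qop" and S :: "'a set"
  assumes "finite Lam"
    and "\<forall>x\<in>Lam. 0 < d x"
    and "star_algebra Lam d A"
    and "visibly_simple Lam d l A"
    and "Q \<in> ops Lam d"
    and "X \<in> A"
    and "S \<subseteq> Lam"
    and "supported_on Lam d X S"
    and "op_trace Lam d (op_mult Lam d X Q) * op_trace Lam d (op_id Lam d)
           \<noteq> op_trace Lam d X * op_trace Lam d Q"
  shows "\<exists>P\<in>A. supported_on Lam d P (nbhd Lam l S) \<and> commutator Lam d Q P \<noteq> zero_op"
proof (rule ccontr)
  assume neg: "\<not> (\<exists>P\<in>A. supported_on Lam d P (nbhd Lam l S) \<and> commutator Lam d Q P \<noteq> zero_op)"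
  note fin = assms(1)
  define I where "I = op_id Lam d"
  have Aops: "A \<subseteq> ops Lam d" and A0: "zero_op \<in> A"
    and Aadd: "\<And>P1 P2. P1 \<in> A \<Longrightarrow> P2 \<in> A \<Longrightarrow> P1 + P2 \<in> A"
    and Asc: "\<And>c P. P \<in> A \<Longrightarrow> sc c P \<in> A"
    and Amult: "\<And>P1 P2. P1 \<in> A \<Longrightarrow> P2 \<in> A \<Longrightarrow> op_mult Lam d P1 P2 \<in> A"
    and Aadj: "\<And>P. P \<in> A \<Longrightarrow> op_adj P \<in> A"
    using assms(3) unfolding star_algebra_def op_add_eq op_smult_eq by auto
  have vis: "\<And>P x. P \<in> A \<Longrightarrow> x \<in> support Lam d P \<Longrightarrow> \<exists>Pp\<in>A.
      supported_on Lam d Pp (nbhd Lam l {x}) \<and> commutator Lam d P Pp \<noteq> zero_op"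
    using assms(4) unfolding visibly_simple_def by blast
  have Xops: "X \<in> ops Lam d" using Aops assms(6) by blast
  have Iops: "I \<in> ops Lam d" unfolding I_def by (rule ops_id)
  show False
  proof (cases "l < 0")
    case True
    have nb: "nbhd Lam l {x} = {}" for x unfolding nbhd_def using True
      by (auto intro: order.strict_trans1[OF _ True] simp: not_le) (meson zero_le_dist le_less_trans not_le)
    have "support Lam d X = {}"
    proof (rule ccontr)
      assume "support Lam d X \<noteq> {}"
      then obtain x where "x \<in> support Lam d X" by blast
      then obtain Pp where Pp: "Pp \<in> A" "supported_on Lam d Pp {}" "commutator Lam d X Pp \<noteq> zero_op"
        using vis[OF assms(6)] nb by metis
      obtain k where k: "Pp = sc k I" using supp_empty[OF Pp(2)] Aops Pp(1) unfolding I_def by blast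
      have "op_mult Lam d X Pp = op_mult Lam d Pp X"
        unfolding k I_def by (simp add: mult_sc_left mult_sc_right mult_id_left mult_id_right Xops fin)
      then show False using Pp(3) comm_zero_iff by blast
    qed
    then have "supported_on Lam d X {}" using supp_support[OF fin Xops] by simp
    then obtain k where k: "X = sc k I" using supp_empty Xops unfolding I_def by blast
    have "op_trace Lam d (op_mult Lam d X Q) = k * op_trace Lam d Q"
      unfolding k I_def by (simp add: mult_sc_left mult_id_left assms(5) fin trace_sc)
    moreover have "op_trace Lam d X = k * op_trace Lam d I" unfolding k by (simp add: trace_sc)
    ultimately show False using assms(9) unfolding I_def by (simp add: mult_ac)
  next
    case False
    define N where "N = nbhd Lam l S"
    have SN: "S \<subseteq> N" unfolding N_def nbhd_def using False assms(7) by force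
    have nbx: "\<And>x. x \<in> S \<Longrightarrow> nbhd Lam l {x} \<subseteq> N" unfolding N_def nbhd_def by auto
    define B where "B = {P\<in>A. supported_on Lam d P N}"
    have Bcomm: "\<And>b. b \<in> B \<Longrightarrow> op_mult Lam d Q b = op_mult Lam d b Q"
      using neg comm_zero_iff unfolding B_def N_def by blast
    have Bops: "\<And>b. b \<in> B \<Longrightarrow> b \<in> ops Lam d" using Aops unfolding B_def by blast
    have Badd: "\<And>P1 P2. P1 \<in> B \<Longrightarrow> P2 \<in> B \<Longrightarrow> P1 + P2 \<in> B"
      unfolding B_def using Aadd supp_add by blast
    have Bsc: "\<And>c P. P \<in> B \<Longrightarrow> sc c P \<in> B"
      unfolding B_def using Asc supp_sc by blast
    have Bmult: "\<And>P1 P2. P1 \<in> B \<Longrightarrow> P2 \<in> B \<Longrightarrow> op_mult Lam d P1 P2 \<in> B"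
      unfolding B_def using Amult supp_mult[OF fin] by blast
    have Badj: "\<And>P. P \<in> B \<Longrightarrow> op_adj P \<in> B"
      unfolding B_def using Aadj supp_adj by blast
    have z0: "(0::'a qop) = sc 0 I" by (simp add: sc_def fun_eq_iff)
    have B0: "0 \<in> B"
    proof -
      have "zero_op \<in> A" by (rule A0)
      moreover have "supported_on Lam d (sc 0 I) N" unfolding I_def by (intro supp_sc supp_id)
      ultimately show ?thesis unfolding B_def zero_op_eq z0 by simp
    qed
    define Bt where "Bt = {F. \<exists>P\<in>B. \<exists>c. F = P + sc c I}"
    have BtI: "P \<in> B \<Longrightarrow> P + sc c I \<in> Bt" for P c unfolding Bt_def by blast
    have BBt: "P \<in> B \<Longrightarrow> P \<in> Bt" for P
    proof -
      assume "P \<in> B"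
      moreover have "P + sc 0 I = P" by (simp add: fun_eq_iff sc_def)
      ultimately show "P \<in> Bt" using BtI[of P 0] by simp
    qed
    have IBt: "I \<in> Bt"
    proof -
      have "0 + sc 1 I = I" by (simp add: fun_eq_iff sc_def)
      then show ?thesis using BtI[OF B0, of 1] by simp
    qed
    have Btops: "Bt \<subseteq> ops Lam d"
    proof
      fix F assume "F \<in> Bt"
      then obtain P c where "P \<in> B" "F = P + sc c I" unfolding Bt_def by blast
      then show "F \<in> ops Lam d"
        using qv.subspace_add[OF ops_subspace Bops qv.subspace_scale[OF ops_subspace Iops]] by blast
    qed
    have Btsub: "qv.subspace Bt"
    proof (rule qv.subspaceI)
      have "0 + sc 0 I = 0" by (simp add: fun_eq_iff sc_def)
      then show "0 \<in> Bt" using BtI[OF B0, of 0] by simp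
    next
      fix F G assume "F \<in> Bt" "G \<in> Bt"
      then obtain P1 c1 P2 c2 where P: "P1 \<in> B" "F = P1 + sc c1 I" "P2 \<in> B" "G = P2 + sc c2 I"
        unfolding Bt_def by blast
      have eq: "F + G = (P1 + P2) + sc (c1 + c2) I"
        unfolding P(2,4) by (simp add: fun_eq_iff sc_def algebra_simps)
      show "F + G \<in> Bt" unfolding eq by (rule BtI) (rule Badd[OF P(1) P(3)])
    next
      fix k F assume "F \<in> Bt"
      then obtain P c where P: "P \<in> B" "F = P + sc c I" unfolding Bt_def by blast
      have eq: "sc k F = sc k P + sc (k * c) I"
        unfolding P(2) by (simp add: fun_eq_iff sc_def algebra_simps)
      show "sc k F \<in> Bt" unfolding eq by (rule BtI) (rule Bsc[OF P(1)])
    qed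
    have Btmult: "op_mult Lam d F G \<in> Bt" if FG: "F \<in> Bt" "G \<in> Bt" for F G
    proof -
      obtain P1 c1 P2 c2 where P: "P1 \<in> B" "F = P1 + sc c1 I" "P2 \<in> B" "G = P2 + sc c2 I"
        using FG unfolding Bt_def by blast
      have eq: "op_mult Lam d F G = (op_mult Lam d P1 P2 + sc c2 P1 + sc c1 P2) + sc (c1 * c2) I"
        unfolding P(2,4) I_def
        by (simp add: mult_add_left mult_add_right mult_sc_left mult_sc_right mult_id_left mult_id_right
            Bops[OF P(1)] Bops[OF P(3)] ops_id fin) (simp add: fun_eq_iff sc_def algebra_simps)
      show ?thesis unfolding eq by (rule BtI) (intro Badd Bsc Bmult P(1) P(3))
    qed
    have Btadj: "op_adj F \<in> Bt" if F: "F \<in> Bt" for F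
    proof -
      obtain P c where P: "P \<in> B" "F = P + sc c I" using F unfolding Bt_def by blast
      have "op_adj F = op_adj P + sc (cnj c) I" unfolding P(2) I_def by simp
      then show ?thesis using BtI[OF Badj[OF P(1)]] by simp
    qed
    let ?E = "(\<lambda>(s, t). elem s t) ` (confs Lam d \<times> confs Lam d)"
    have finE: "finite ?E" by (intro finite_imageI finite_cartesian_product finite_confs[OF fin])
    obtain Bs where Bs: "Bs \<subseteq> Bt" "qv.independent Bs" "Bt \<subseteq> qv.span Bs" "card Bs = qv.dim Bt"
      by (rule qv.basis_exists)
    have BsE: "Bs \<subseteq> qv.span ?E" using Bs(1) Btops ops_span_elem[OF fin] by (meson order_trans)
    have "finite Bs \<and> card Bs \<le> card ?E" by (rule qv.independent_span_bound[OF finE Bs(2) BsE])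
    then have finBs: "finite Bs" by (rule conjunct1)
    have Bsops: "Bs \<subseteq> ops Lam d" using Bs(1) Btops by (rule order_trans)
    have "\<exists>Y\<in>qv.span Bs. \<forall>v\<in>Bs. ip Lam d v (Q - Y) = 0"
      using proj_exists[OF fin finBs Bsops] by (rule spec)
    then obtain Y where Y: "Y \<in> qv.span Bs" "\<forall>v\<in>Bs. ip Lam d v (Q - Y) = 0" by (rule bexE)
    have orth: "ip Lam d Z Y = ip Lam d Z Q" if Z: "Z \<in> Bt" for Z
    proof -
      have "Z \<in> qv.span Bs" using Z Bs(3) by (rule subsetD[rotated])
      then have "ip Lam d Z (Q - Y) = 0" by (rule ip_span_zero[OF Y(2)])
      then show ?thesis unfolding ip_diff_right by simp
    qed
    have YBt: "Y \<in> Bt" using qv.span_minimal[OF Bs(1) Btsub] Y(1) by (rule subsetD)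
    have Yops: "Y \<in> ops Lam d" using YBt Btops by blast
    have Ycomm: "op_mult Lam d Y b = op_mult Lam d b Y" if b: "b \<in> B" for b
    proof -
      define D where "D = op_mult Lam d Y b - op_mult Lam d b Y"
      have bBt: "b \<in> Bt" using BBt[OF b] .
      have DBt: "D \<in> Bt" unfolding D_def
        by (rule qv.subspace_diff[OF Btsub]) (intro Btmult YBt bBt)+
      have "ip Lam d Z D = 0" if Z: "Z \<in> Bt" for Z
      proof -
        have Z1: "op_mult Lam d Z (op_adj b) \<in> Bt" by (intro Btmult Btadj Z bBt)
        have Z2: "op_mult Lam d (op_adj b) Z \<in> Bt" by (intro Btmult Btadj Z bBt)
        have "ip Lam d Z D = ip Lam d Z (op_mult Lam d Y b) - ip Lam d Z (op_mult Lam d b Y)"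
          unfolding D_def by (rule ip_diff_right)
        also have "\<dots> = ip Lam d (op_mult Lam d Z (op_adj b)) Y - ip Lam d (op_mult Lam d (op_adj b) Z) Y"
          by (simp only: ip_mult1[where Z=Z and Y=Y and b=b] ip_mult2[where Z=Z and Y=Y and b=b])
        also have "\<dots> = ip Lam d (op_mult Lam d Z (op_adj b)) Q - ip Lam d (op_mult Lam d (op_adj b) Z) Q"
          using orth[OF Z1] orth[OF Z2] by simp
        also have "\<dots> = ip Lam d Z (op_mult Lam d Q b) - ip Lam d Z (op_mult Lam d b Q)"
          by (simp only: ip_mult1[where Z=Z and Y=Q and b=b] ip_mult2[where Z=Z and Y=Q and b=b])
        also have "\<dots> = 0" using Bcomm[OF b] by simp
        finally show ?thesis .
      qed
      then have "ip Lam d D D = 0" using DBt by blast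
      then have "D = 0" using ip_self_zero[OF fin] DBt Btops by blast
      then show ?thesis unfolding D_def by simp
    qed
    obtain P0 c where P0: "P0 \<in> B" "Y = P0 + sc c I" using YBt unfolding Bt_def by blast
    have P0ops: "P0 \<in> ops Lam d" using Bops[OF P0(1)] .
    have P0comm: "op_mult Lam d P0 b = op_mult Lam d b P0" if b: "b \<in> B" for b
    proof -
      have "op_mult Lam d P0 b + sc c b = op_mult Lam d Y b"
        unfolding P0(2) I_def by (simp add: mult_add_left mult_sc_left mult_id_left Bops[OF b] fin)
      also have "\<dots> = op_mult Lam d b Y" by (rule Ycomm[OF b])
      also have "\<dots> = op_mult Lam d b P0 + sc c b"
        unfolding P0(2) I_def by (simp add: mult_add_right mult_sc_right mult_id_right Bops[OF b] fin)
      finally show ?thesis by simp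
    qed
    have P0A: "P0 \<in> A" using P0(1) unfolding B_def by blast
    have disj: "support Lam d P0 \<inter> S = {}"
    proof (rule ccontr)
      assume "support Lam d P0 \<inter> S \<noteq> {}"
      then obtain x where x: "x \<in> support Lam d P0" "x \<in> S" by blast
      obtain Pp where Pp: "Pp \<in> A" "supported_on Lam d Pp (nbhd Lam l {x})" "commutator Lam d P0 Pp \<noteq> zero_op"
        using vis[OF P0A x(1)] by blast
      have "Pp \<in> B" unfolding B_def using Pp(1) supp_mono[OF Pp(2) nbx[OF x(2)]] by blast
      then show False using P0comm Pp(3) comm_zero_iff by blast
    qed
    have "support Lam d P0 \<subseteq> Lam" by (rule support_sub[OF order_refl supp_Lam[OF P0ops]])
    then have "support Lam d P0 \<subseteq> Lam - S" using disj by blast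
    then have P0supp: "supported_on Lam d P0 (Lam - S)" using supp_mono[OF supp_support[OF fin P0ops]] by blast
    have fact: "op_trace Lam d (op_mult Lam d X P0) * op_trace Lam d I = op_trace Lam d X * op_trace Lam d P0"
      unfolding I_def by (rule trace_factor[OF fin assms(7) assms(8) P0supp])
    have XB: "X \<in> B" unfolding B_def using assms(6) supp_mono[OF assms(8) SN] by blast
    have t1: "op_trace Lam d (op_mult Lam d X Q) = op_trace Lam d (op_mult Lam d X Y)"
      using orth[OF BBt[OF Badj[OF XB]]] unfolding ip_adj_left by simp
    have t2: "op_trace Lam d Q = op_trace Lam d Y"
      using orth[OF IBt] unfolding I_def ip_id_left[OF Yops fin] ip_id_left[OF assms(5) fin] by simp
    have t3: "op_trace Lam d (op_mult Lam d X Y) = op_trace Lam d (op_mult Lam d X P0) + c * op_trace Lam d X"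
      unfolding P0(2) I_def by (simp add: mult_add_right mult_sc_right mult_id_right Xops fin trace_add trace_sc)
    have t4: "op_trace Lam d Y = op_trace Lam d P0 + c * op_trace Lam d I"
      unfolding P0(2) by (simp add: trace_add trace_sc)
    have "op_trace Lam d (op_mult Lam d X Q) * op_trace Lam d I = op_trace Lam d X * op_trace Lam d Q"
      unfolding t1 t2 t3 t4 using fact by (simp add: algebra_simps)
    then show False using assms(9) unfolding I_def by simp
  qed
qed

end
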